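(* Let $b\in\mathbb R^d$ and $\lambda_1\ge\lambda_2\ge\dots\ge\lambda_d>0$. Let $F(y)=-\sum_{i=1}^d|b_i|\sqrt{y_i}-\sqrt{\sum_{i=1}^d\lambda_i^{-1}y_i}$ and let $y^\star$ be an optimal solution of $\min_{y\in\Delta_{d-1}}F(y)$. Then $y^\star_i\ge B_i$ for all $i\in[d]$, where $B_i=b_i^2\,(\|b\|_2+\lambda_d^{-1/2})^{-2}$.
   Context: $\Delta_{d-1}=\{y\in\mathbb R^d:y_i\ge0,\sum_iy_i=1\}$. *)

theory Defs
  imports "HOL-Analysis.Analysis"
begin

text \<open>Vectors in R^d are represented as functions nat => real, indices 1..d.\<close>

definition std_simplex :: "nat \<Rightarrow> (nat \<Rightarrow> real) set" where
  "std_simplex d = {y. (\<forall>i\<in>{1..d}. y i \<ge> 0) \<and> (\<Sum>i=1..d. y i) = 1 \<and> (\<forall>i. i \<notin> {1..d} \<longrightarrow> y i = 0)}"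

definition Fobj :: "nat \<Rightarrow> (nat \<Rightarrow> real) \<Rightarrow> (nat \<Rightarrow> real) \<Rightarrow> (nat \<Rightarrow> real) \<Rightarrow> real" where
  "Fobj d b lam y = - (\<Sum>i=1..d. \<bar>b i\<bar> * sqrt (y i)) - sqrt (\<Sum>i=1..d. y i / lam i)"

end

theory Submission
  imports Defs
begin
lemma key_ineq:
  fixes p q r t a c \<beta> :: real
  assumes "p \<ge> 0" "q \<ge> 0" "r \<ge> 0" "0 < t" "t < 1"
    and "p\<^sup>2 = 1 - t" "q\<^sup>2 = (1 - t) * a + t" "r\<^sup>2 = a"
    and "\<beta> > 0" "c \<ge> 0"
    and phi: "c * (q + r) < \<beta> * (1 - a) * (1 + p)"
  shows "c + \<beta> * r < p * c + \<beta> * q"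
proof -
  have "(1 - t) * a \<ge> 0" using assms(4,5,8) by (metis diff_ge_0_iff_ge less_eq_real_def mult_nonneg_nonneg zero_le_power2)
  hence "q\<^sup>2 > 0" using assms(4,7) by linarith
  hence qpos: "q > 0" using assms(2) by (metis less_eq_real_def power_zero_numeral)
  have p1: "p < 1"
  proof (rule ccontr)
    assume "\<not> p < 1" hence "1 \<le> p\<^sup>2" by (simp add: one_le_power)
    thus False using assms(4,6) by linarith
  qed
  have qr: "q + r > 0" using qpos assms(3) by simp
  have "(q - r) * (q + r) = (1 - p) * (1 + p) * (1 - a)"
    using assms(6,7,8) by algebra
  hence qmr: "q - r = (1 - p) * ((1 + p) * (1 - a)) / (q + r)"
    using qr by (simp add: field_simps)
  have "c * (1 - p) = (1 - p) * (c * (q + r)) / (q + r)" using qr by simp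
  also have "\<dots> < (1 - p) * (\<beta> * (1 - a) * (1 + p)) / (q + r)"
    using qr p1 phi by (intro divide_strict_right_mono mult_strict_left_mono) auto
  also have "\<dots> = \<beta> * ((1 - p) * ((1 + p) * (1 - a)) / (q + r))" by (simp add: algebra_simps)
  also have "\<dots> = \<beta> * (q - r)" using qmr by simp
  finally show ?thesis by (simp add: algebra_simps)
qed
theorem lemma1:
  fixes d :: nat and b lam ystar :: "nat \<Rightarrow> real"
  assumes "d \<ge> 1"
    and "\<And>i j. 1 \<le> i \<Longrightarrow> i \<le> j \<Longrightarrow> j \<le> d \<Longrightarrow> lam i \<ge> lam j"
    and "lam d > 0"
    and "ystar \<in> std_simplex d"
    and "\<And>y. y \<in> std_simplex d \<Longrightarrow> Fobj d b lam ystar \<le> Fobj d b lam y"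
  shows "\<forall>i\<in>{1..d}. ystar i \<ge> (b i)\<^sup>2 / (sqrt (\<Sum>j=1..d. (b j)\<^sup>2) + 1 / sqrt (lam d))\<^sup>2"
proof (rule ballI, rule ccontr)
  fix k assume k: "k \<in> {1..d}"
  define N where "N = sqrt (\<Sum>j=1..d. (b j)\<^sup>2)"
  define L where "L = 1 / sqrt (lam d)"
  define a where "a = ystar k"
  define \<beta> where "\<beta> = \<bar>b k\<bar>"
  define r where "r = sqrt a"
  define A where "A = (\<Sum>i=1..d. \<bar>b i\<bar> * sqrt (ystar i))"
  define S2 where "S2 = (\<Sum>i=1..d. ystar i / lam i)"
  define S where "S = sqrt S2"
  assume "\<not> (ystar k \<ge> (b k)\<^sup>2 / (sqrt (\<Sum>j=1..d. (b j)\<^sup>2) + 1 / sqrt (lam d))\<^sup>2)"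
  hence aB: "a < (b k)\<^sup>2 / (N + L)\<^sup>2" unfolding a_def N_def L_def by simp
  have ynn: "\<And>i. i \<in> {1..d} \<Longrightarrow> ystar i \<ge> 0" and ysum: "(\<Sum>i=1..d. ystar i) = 1"
    and yout: "\<And>i. i \<notin> {1..d} \<Longrightarrow> ystar i = 0"
    using assms(4) unfolding std_simplex_def by auto
  have lampos: "\<And>i. i \<in> {1..d} \<Longrightarrow> lam i \<ge> lam d" using assms(2) by auto
  have lp: "\<And>i. i \<in> {1..d} \<Longrightarrow> lam i > 0" using lampos assms(3) by (meson less_le_trans)
  have a0: "a \<ge> 0" using ynn k a_def by auto
  have Lpos: "L > 0" using assms(3) L_def by simp
  have N0: "N \<ge> 0" unfolding N_def by (simp add: sum_nonneg)
  have A0: "A \<ge> 0" unfolding A_def using ynn by (intro sum_nonneg) simp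
  have S20: "S2 \<ge> 0" unfolding S2_def using ynn lp by (intro sum_nonneg) (simp add: less_imp_le)
  have S0: "S \<ge> 0" using S20 S_def by simp
  have "A\<^sup>2 \<le> (\<Sum>i=1..d. \<bar>b i\<bar>\<^sup>2) * (\<Sum>i=1..d. (sqrt (ystar i))\<^sup>2)"
    unfolding A_def by (rule Cauchy_Schwarz_ineq_sum)
  also have "(\<Sum>i=1..d. (sqrt (ystar i))\<^sup>2) = (\<Sum>i=1..d. ystar i)" using ynn by (intro sum.cong) auto
  also have "\<dots> = 1" by (rule ysum)
  finally have "A\<^sup>2 \<le> N\<^sup>2" unfolding N_def by (simp add: sum_nonneg)
  hence AN: "A \<le> N" using N0 A0 by (meson power2_le_imp_le)
  have "S2 \<le> (\<Sum>i=1..d. ystar i / lam d)" unfolding S2_def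
    using ynn lp lampos assms(3) by (intro sum_mono) (simp add: divide_left_mono)
  also have "\<dots> = 1 / lam d" using ysum by (simp add: sum_divide_distrib[symmetric])
  finally have "S \<le> sqrt (1 / lam d)" unfolding S_def by simp
  hence SL: "S \<le> L" unfolding L_def by (simp add: real_sqrt_divide)
  have "r < sqrt ((b k)\<^sup>2 / (N + L)\<^sup>2)" unfolding r_def using aB by simp
  also have "\<dots> = \<beta> / (N + L)" using N0 Lpos unfolding \<beta>_def by (simp add: real_sqrt_divide)
  finally have rlt: "r < \<beta> / (N + L)" .
  have r0: "r \<ge> 0" using r_def a0 by simp
  have "r * (A + S) \<le> r * (N + L)" using AN SL r0 by (intro mult_left_mono) auto
  also have "\<dots> < \<beta>" using rlt N0 Lpos by (simp add: field_simps)
  finally have rAS: "r * (A + S) < \<beta>" .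
  have bpos: "\<beta> > 0" using rAS r0 A0 S0 by (smt (verit) mult_nonneg_nonneg)
  have Asplit: "A = \<beta> * r + (\<Sum>i\<in>{1..d}-{k}. \<bar>b i\<bar> * sqrt (ystar i))"
    unfolding A_def \<beta>_def r_def a_def using k by (simp add: sum.remove)
  define c where "c = A - \<beta> * r + S"
  have "(\<Sum>i\<in>{1..d}-{k}. \<bar>b i\<bar> * sqrt (ystar i)) \<ge> 0" using ynn by (intro sum_nonneg) auto
  hence c0: "c \<ge> 0" unfolding c_def using Asplit S0 by simp
  have ra: "r\<^sup>2 = a" using a0 r_def by simp
  have phi0: "c * (r + r) < \<beta> * (1 - a) * (1 + 1)"
  proof -
    have "c * r < \<beta> * (1 - a)" using rAS ra unfolding c_def by (simp add: algebra_simps power2_eq_square)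
    thus ?thesis by simp
  qed
  define \<phi> where "\<phi> = (\<lambda>t::real. \<beta> * (1 - a) * (1 + sqrt (1 - t)) - c * (sqrt ((1 - t) * a + t) + r))"
  have "(\<phi> \<longlongrightarrow> \<phi> 0) (at_right 0)" unfolding \<phi>_def by (intro tendsto_intros)
  moreover have "\<phi> 0 > 0" using phi0 unfolding \<phi>_def r_def by simp
  ultimately have ev1: "\<forall>\<^sub>F t in at_right 0. \<phi> t > 0" by (rule order_tendstoD)
  have ev2: "\<forall>\<^sub>F t in at_right (0::real). 0 < t \<and> t < 1"
    by (simp add: eventually_at_right_field) (rule exI[of _ 1], auto)
  obtain t where t: "0 < t" "t < 1" "\<phi> t > 0"
    using eventually_happens'[OF _ eventually_conj[OF ev1 ev2]] by auto
  define yt where "yt = (\<lambda>i. (1 - t) * ystar i + (if i = k then t else 0))"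
  have ytin: "yt \<in> std_simplex d"
  proof -
    have "(\<Sum>i=1..d. yt i) = (1 - t) * (\<Sum>i=1..d. ystar i) + (\<Sum>i=1..d. (if i = k then t else 0))"
      unfolding yt_def by (simp add: sum.distrib sum_distrib_left)
    also have "\<dots> = 1" using ysum k by simp
    finally show ?thesis unfolding std_simplex_def using ynn yout t k
      unfolding yt_def by auto
  qed
  define p where "p = sqrt (1 - t)"
  define q where "q = sqrt ((1 - t) * a + t)"
  have "(\<Sum>i=1..d. \<bar>b i\<bar> * sqrt (yt i)) = \<beta> * q + (\<Sum>i\<in>{1..d}-{k}. \<bar>b i\<bar> * sqrt (yt i))"
    unfolding \<beta>_def q_def a_def using k by (simp add: sum.remove yt_def)
  also have "(\<Sum>i\<in>{1..d}-{k}. \<bar>b i\<bar> * sqrt (yt i)) = p * (\<Sum>i\<in>{1..d}-{k}. \<bar>b i\<bar> * sqrt (ystar i))"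
    unfolding sum_distrib_left p_def yt_def by (intro sum.cong) (auto simp: real_sqrt_mult)
  also have "\<dots> = p * (A - \<beta> * r)" using Asplit by simp
  finally have T1: "(\<Sum>i=1..d. \<bar>b i\<bar> * sqrt (yt i)) = \<beta> * q + p * (A - \<beta> * r)" .
  have "(1 - t) * S2 \<le> (\<Sum>i=1..d. yt i / lam i)"
    unfolding S2_def sum_distrib_left
  proof (intro sum_mono)
    fix i assume i: "i \<in> {1..d}"
    have "yt i \<ge> (1 - t) * ystar i" using t by (simp add: yt_def)
    hence "((1 - t) * ystar i) / lam i \<le> yt i / lam i" using lp[OF i] by (simp add: divide_right_mono)
    thus "(1 - t) * (ystar i / lam i) \<le> yt i / lam i" by simp
  qed
  hence "sqrt ((1 - t) * S2) \<le> sqrt (\<Sum>i=1..d. yt i / lam i)" by simp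
  hence T2: "p * S \<le> sqrt (\<Sum>i=1..d. yt i / lam i)" unfolding p_def S_def by (simp add: real_sqrt_mult)
  have "Fobj d b lam yt \<le> - (p * c + \<beta> * q)"
    unfolding Fobj_def T1 c_def using T2 by (simp add: algebra_simps)
  moreover have "Fobj d b lam ystar = - (c + \<beta> * r)"
    unfolding Fobj_def c_def A_def S_def S2_def by simp
  moreover have "c + \<beta> * r < p * c + \<beta> * q"
    apply (rule key_ineq[of p q r t a])
    using t a0 r0 ra bpos c0 unfolding p_def q_def \<phi>_def
    by (auto simp: mult_nonneg_nonneg)
  ultimately have "Fobj d b lam yt < Fobj d b lam ystar" by simp
  with assms(5)[OF ytin] show False by simp
qed

end
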